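(* Fix $q\ge 2$ and $z\in\mathbb Z$. There exist an integer $N$ and a constant $C>0$ (independent of $n$) such that for all $n\ge N$, with $k=\lceil\log_q n\rceil+z$, $$\log_2 q-\frac{C}{n}\le E_{k,q}\le \log_2 q.$$
   Context: $\Sigma_q=\{0,\dots,q-1\}$. A vector in $\Sigma_q^m$ is a $k$-RLL vector if $m<k$ or it has no run of $k$ consecutive zeros; $a_q(m,k)$ is the number of such vectors. For fixed $k,q$, $E_{k,q}=\lim_{m\to\infty}\frac{\log_2 a_q(m,k)}{m}$ (this limit exists). *)

theory Defs
  imports Complex_Main
begin

text \<open>A vector in Sigma_q^m is represented as a list of length m with entries in {0..<q}.\<close>

definition has_zero_run :: "nat \<Rightarrow> nat list \<Rightarrow> bool" where
  "has_zero_run k xs \<longleftrightarrow> (\<exists>i. i + k \<le> length xs \<and> (\<forall>j<k. xs ! (i + j) = 0))"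

definition is_RLL :: "nat \<Rightarrow> nat list \<Rightarrow> bool" where
  "is_RLL k xs \<longleftrightarrow> length xs < k \<or> \<not> has_zero_run k xs"

definition a_RLL :: "nat \<Rightarrow> nat \<Rightarrow> nat \<Rightarrow> nat" where
  "a_RLL q m k = card {xs :: nat list. length xs = m \<and> set xs \<subseteq> {..<q} \<and> is_RLL k xs}"

definition E_RLL :: "nat \<Rightarrow> nat \<Rightarrow> real" where
  "E_RLL k q = lim (\<lambda>m. log 2 (real (a_RLL q m k)) / real m)"

end

theory Submission
  imports Defs
begin


definition GG :: "nat \<Rightarrow> nat \<Rightarrow> nat \<Rightarrow> nat list set" where
  "GG q m k = {xs. length xs = m \<and> set xs \<subseteq> {..<q} \<and> is_RLL k xs}"

lemma a_GG: "a_RLL q m k = card (GG q m k)"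
  unfolding a_RLL_def GG_def by simp

lemma is_RLL_iff: "is_RLL k xs \<longleftrightarrow> \<not> has_zero_run k xs"
  unfolding is_RLL_def has_zero_run_def by auto

lemma finite_GG: "finite (GG q m k)"
  by (rule finite_subset[OF _ finite_lists_length_eq[of "{..<q}" m]]) (auto simp: GG_def)

lemma a_le: "a_RLL q m k \<le> q ^ m"
proof -
  have "card (GG q m k) \<le> card {xs. set xs \<subseteq> {..<q} \<and> length xs = m}"
    by (rule card_mono[OF finite_lists_length_eq]) (auto simp: GG_def)
  then show ?thesis by (simp add: a_GG card_lists_length_eq)
qed

lemma a_ge1: assumes "q \<ge> 2" "k \<ge> 1" shows "a_RLL q m k \<ge> 1"
proof -
  have "replicate m 1 \<in> GG q m k"
    using assms unfolding GG_def is_RLL_iff has_zero_run_def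
    by (auto intro!: exI[of _ 0])
  then have "GG q m k \<noteq> {}" by blast
  then show ?thesis using finite_GG[of q m k] by (simp add: a_GG Suc_le_eq card_gt_0_iff)
qed

lemma take_RLL: assumes "\<not> has_zero_run k xs" shows "\<not> has_zero_run k (take m xs)"
proof
  assume "has_zero_run k (take m xs)"
  then obtain i where i: "i + k \<le> length (take m xs)" and z: "\<forall>j<k. take m xs ! (i + j) = 0"
    unfolding has_zero_run_def by blast
  have "has_zero_run k xs" unfolding has_zero_run_def
  proof (intro exI[of _ i] conjI allI impI)
    show "i + k \<le> length xs" using i by simp
    fix j assume j: "j < k"
    then have "take m xs ! (i + j) = 0" using z by blast
    moreover have "i + j < m" using i j by simp
    ultimately show "xs ! (i + j) = 0" by simp
  qed
  with assms show False by simp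
qed

lemma drop_RLL: assumes "\<not> has_zero_run k xs" shows "\<not> has_zero_run k (drop m xs)"
proof
  assume "has_zero_run k (drop m xs)"
  then obtain i where i: "i + k \<le> length (drop m xs)" and z: "\<forall>j<k. drop m xs ! (i + j) = 0"
    unfolding has_zero_run_def by blast
  have "has_zero_run k xs"
  proof (cases "k = 0")
    case True
    then show ?thesis unfolding has_zero_run_def by auto
  next
    case False
    show ?thesis unfolding has_zero_run_def
    proof (intro exI[of _ "m + i"] conjI allI impI)
      show "m + i + k \<le> length xs" using i False by simp
      fix j assume j: "j < k"
      then have "drop m xs ! (i + j) = 0" using z by blast
      moreover have "m + i \<le> length xs" using i False by simp
      ultimately show "xs ! (m + i + j) = 0" by (simp add: add.assoc)
    qed
  qed
  with assms show False by simp
qed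

lemma a_sub: "a_RLL q (m + n) k \<le> a_RLL q m k * a_RLL q n k"
proof -
  let ?f = "\<lambda>xs. (take m xs, drop m xs)"
  have "inj_on ?f (GG q (m+n) k)"
    by (rule inj_onI) (metis append_take_drop_id prod.inject)
  moreover have "?f ` GG q (m+n) k \<subseteq> GG q m k \<times> GG q n k"
    by (auto simp: GG_def is_RLL_iff take_RLL drop_RLL dest: in_set_takeD in_set_dropD)
  ultimately have "card (GG q (m+n) k) \<le> card (GG q m k \<times> GG q n k)"
    by (intro card_inj_on_le) (auto intro: finite_GG)
  then show ?thesis by (simp add: a_GG card_cartesian_product)
qed

lemma concat_RLL:
  assumes "\<not> has_zero_run k x" "\<not> has_zero_run k y" "c \<noteq> 0"
  shows "\<not> has_zero_run k (x @ c # y)"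
proof
  assume "has_zero_run k (x @ c # y)"
  then obtain i where i: "i + k \<le> length x + length y + 1"
    and z: "\<forall>j<k. (x @ c # y) ! (i + j) = 0" unfolding has_zero_run_def by auto
  show False
  proof (cases "i + k \<le> length x")
    case True
    then have "has_zero_run k x" unfolding has_zero_run_def
      using z by (intro exI[of _ i]) (auto simp: nth_append)
    with assms show False by simp
  next
    case False
    show False
    proof (cases "i \<le> length x")
      case True
      then have "length x - i < k" using False by auto
      with z have "(x @ c # y) ! (i + (length x - i)) = 0" by blast
      with True assms(3) show False by (simp add: nth_append)
    next
      case F2: False
      have "has_zero_run k y" unfolding has_zero_run_def
      proof (intro exI[of _ "i - length x - 1"] conjI allI impI)
        show "i - length x - 1 + k \<le> length y" using i F2 by auto
        fix j assume "j < k"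
        with z have "(x @ c # y) ! (i + j) = 0" by blast
        moreover have "i + j - length x = Suc (i - length x - 1 + j)" using F2 by auto
        ultimately show "y ! (i - length x - 1 + j) = 0" using F2 by (simp add: nth_append)
      qed
      with assms show False by simp
    qed
  qed
qed

lemma a_sup: "(q - 1) * a_RLL q m k * a_RLL q n k \<le> a_RLL q (m + n + 1) k"
proof -
  let ?f = "\<lambda>(x, c, y). x @ (c::nat) # y"
  have "inj_on ?f (GG q m k \<times> {1..<q} \<times> GG q n k)"
  proof (rule inj_onI)
    fix a b assume a: "a \<in> GG q m k \<times> {1..<q} \<times> GG q n k" and b: "b \<in> GG q m k \<times> {1..<q} \<times> GG q n k"
      and e: "?f a = ?f b"
    obtain x c y where ax: "a = (x, c, y)" by (cases a) auto
    obtain x' c' y' where bx: "b = (x', c', y')" by (cases b) auto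
    have lx: "length x = m" "length x' = m" using a b ax bx by (auto simp: GG_def)
    have e2: "x @ c # y = x' @ c' # y'" using e ax bx by simp
    then have "x = x' \<and> c # y = c' # y'" using lx by (simp add: append_eq_append_conv)
    then have "x = x'" "c # y = c' # y'" by auto
    then show "a = b" using ax bx by simp
  qed
  moreover have "?f ` (GG q m k \<times> {1..<q} \<times> GG q n k) \<subseteq> GG q (m+n+1) k"
  proof
    fix t assume "t \<in> ?f ` (GG q m k \<times> {1..<q} \<times> GG q n k)"
    then obtain x c y where t: "t = x @ c # y" and x: "x \<in> GG q m k" and c: "c \<in> {1..<q}" and y: "y \<in> GG q n k"
      by auto
    have "\<not> has_zero_run k t" unfolding t
      by (rule concat_RLL) (use x y c in \<open>auto simp: GG_def is_RLL_iff\<close>)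
    moreover have "length t = m + n + 1" using x y t by (simp add: GG_def)
    moreover have "set t \<subseteq> {..<q}" using x y c t by (auto simp: GG_def)
    ultimately show "t \<in> GG q (m+n+1) k" by (simp add: GG_def is_RLL_iff)
  qed
  ultimately have le: "card (GG q m k \<times> {1..<q} \<times> GG q n k) \<le> card (GG q (m+n+1) k)"
    by (rule card_inj_on_le[OF _ _ finite_GG])
  have "card (GG q m k \<times> {1..<q} \<times> GG q n k) = a_RLL q m k * ((q - 1) * a_RLL q n k)"
    by (simp add: a_GG card_cartesian_product)
  also have "\<dots> = (q - 1) * a_RLL q m k * a_RLL q n k" by simp
  finally show ?thesis using le by (simp add: a_GG)
qed




lemma fekete:
  fixes u :: "nat \<Rightarrow> real"
  assumes sub: "\<And>m n. u (m + n) \<le> u m + u n" and nn: "\<And>m. u m \<ge> 0"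
  shows "(\<lambda>n. u n / real n) \<longlonglongrightarrow> (INF n\<in>{1..}. u n / real n)"
proof -
  define L where "L = (INF n\<in>{1..}. u n / real n)"
  have bdd: "bdd_below ((\<lambda>n. u n / real n) ` {1..})"
    by (rule bdd_belowI[of _ 0]) (auto simp: nn)
  have Lle: "L \<le> u n / real n" if "n \<ge> 1" for n
    unfolding L_def using that by (intro cINF_lower[OF bdd]) auto
  have mult: "u (j * p + r) \<le> real j * u p + u r" for j p r
  proof (induction j)
    case (Suc j)
    have "u (Suc j * p + r) = u (p + (j * p + r))" by (simp add: add.assoc)
    also have "\<dots> \<le> u p + u (j * p + r)" by (rule sub)
    finally show ?case using Suc by (simp add: algebra_simps)
  qed simp
  show ?thesis unfolding L_def[symmetric]
  proof (rule LIMSEQ_I)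
    fix r :: real assume r: "r > 0"
    have "L < L + r / 2" using r by simp
    then obtain p where p: "p \<ge> 1" "u p / real p < L + r / 2"
      using cINF_less_iff[OF _ bdd, of "L + r / 2"] \<open>L < L + r / 2\<close>
      unfolding L_def[symmetric] by auto
    define M where "M = Max (u ` {..p})"
    have uM: "u i \<le> M" if "i \<le> p" for i
      unfolding M_def using that by (intro Max_ge) auto
    have M0: "M \<ge> 0" using uM[of 0] nn[of 0] by simp
    obtain n0 :: nat where n0: "2 * M / r < real n0" using reals_Archimedean2 by blast
    show "\<exists>no. \<forall>n\<ge>no. norm (u n / real n - L) < r"
    proof (intro exI[of _ "max 1 n0"] allI impI)
      fix n assume n: "max 1 n0 \<le> n"
      then have n1: "real n \<ge> 1" and nn0: "real n \<ge> real n0" by auto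
      have npos: "real n > 0" using n1 by simp
      have "n = (n div p) * p + n mod p" by simp
      then have "u n \<le> real (n div p) * u p + u (n mod p)"
        using mult[of "n div p" p "n mod p"] by simp
      also have "u (n mod p) \<le> M"
      proof (rule uM)
        have "n mod p < p" using p(1) by simp
        then show "n mod p \<le> p" by simp
      qed
      also have "real (n div p) * u p \<le> (real n / real p) * u p"
        by (intro mult_right_mono of_nat_div_le_of_nat nn)
      finally have "u n \<le> (real n / real p) * u p + M" by simp
      then have "u n / real n \<le> u p / real p + M / real n"
        using npos by (simp add: field_simps)
      moreover have "M / real n < r / 2"
      proof -
        have "2 * M < r * real n0" using n0 r by (simp add: pos_divide_less_eq mult.commute)
        also have "\<dots> \<le> r * real n" using nn0 r by simp
        finally have "2 * M < r * real n" .
        then show ?thesis using npos by (simp add: field_simps)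
      qed
      ultimately have "u n / real n < L + r" using p(2) by linarith
      moreover have "L \<le> u n / real n" using Lle n by simp
      ultimately show "norm (u n / real n - L) < r" by simp
    qed
  qed
qed



lemma lower_abstract:
  fixes u :: "nat \<Rightarrow> real" and g :: real
  assumes sub: "\<And>m n. u (m + n) \<le> u m + u n"
    and sup: "\<And>m n. u m + u n + g \<le> u (m + n + 1)"
    and nn: "\<And>m. u m \<ge> 0" and g: "g \<ge> 0" and m: "m \<ge> 1"
  shows "(u P + g) / real (P + 1) \<le> u m / real m"
proof (rule ccontr)
  assume contra: "\<not> ?thesis"
  define Q where "Q = P + 1"
  define X where "X = (u P + g) / real Q"
  define w where "w s = u (s - 1) + g" for s
  have Q1: "Q \<ge> 1" by (simp add: Q_def)
  have X0: "X \<ge> 0" unfolding X_def using nn g by simp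
  have wQ: "w Q = real Q * X" unfolding X_def w_def Q_def by simp
  have w_sup: "w s + w t \<le> w (s + t)" if "s \<ge> 1" "t \<ge> 1" for s t
  proof -
    have "s + t - 1 = (s - 1) + (t - 1) + 1" using that by simp
    then show ?thesis unfolding w_def using sup[of "s - 1" "t - 1"] g by (simp only:)
  qed
  have w_nn: "w s \<ge> 0" for s unfolding w_def using nn g by (simp add: add_nonneg_nonneg)
  have w_mono: "w s \<le> w s'" if s1: "s \<ge> 1" and ss: "s \<le> s'" for s s'
  proof (cases "s = s'")
    case False
    obtain t where t0: "s' = s + t" using ss le_iff_add by blast
    with False have t: "s' = s + t" "t \<ge> 1" by auto
    show ?thesis using w_sup[of s t] w_nn[of t] s1 t by simp
  qed simp
  have w_mult: "real (Suc j) * w Q \<le> w (Suc j * Q)" for j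
  proof (induction j)
    case (Suc j)
    have "w (Suc j * Q) + w Q \<le> w (Suc j * Q + Q)"
      by (rule w_sup) (use Q1 in auto)
    then show ?case using Suc by (simp add: algebra_simps)
  qed simp
  have u_mult: "u (Suc j * m) \<le> real (Suc j) * u m" for j
  proof (induction j)
    case (Suc j)
    have "u (m + Suc j * m) \<le> u m + u (Suc j * m)" by (rule sub)
    then show ?case using Suc by (simp add: algebra_simps)
  qed simp
  have key: "(real j * real m - real Q) * X \<le> real j * u m + g" if j: "j \<ge> 1" for j
  proof -
    define s where "s = j * m + 1"
    define j' where "j' = s div Q"
    have hs: "s < (j' + 1) * Q"
    proof -
      have "s = j' * Q + s mod Q" unfolding j'_def by simp
      moreover have "s mod Q < Q" using Q1 by simp
      moreover have "(j' + 1) * Q = j' * Q + Q" by simp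
      ultimately show ?thesis by linarith
    qed
    have hsr: "real j * real m + 1 < (real j' + 1) * real Q"
    proof -
      have "real (j * m + 1) < real ((j' + 1) * Q)" using hs unfolding s_def by (simp only: of_nat_less_iff)
      then show ?thesis by (simp add: algebra_simps)
    qed
    have ujm: "u (j * m) \<le> real j * u m"
      using u_mult[of "j - 1"] j by simp
    show ?thesis
    proof (cases "j' \<ge> 1")
      case True
      have "real j' * w Q \<le> w (j' * Q)" using w_mult[of "j' - 1"] True by simp
      also have "\<dots> \<le> w s"
        by (rule w_mono) (use True Q1 in \<open>auto simp: j'_def\<close>)
      also have "w s = u (j * m) + g" unfolding w_def s_def by simp
      finally have A: "real j' * real Q * X \<le> real j * u m + g" using wQ ujm by (simp add: mult.assoc)
      from hsr have "real j * real m - real Q \<le> real j' * real Q" by (simp add: algebra_simps)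
      then have "(real j * real m - real Q) * X \<le> real j' * real Q * X"
        by (rule mult_right_mono) (rule X0)
      with A show ?thesis by linarith
    next
      case False
      then have "j' = 0" by simp
      then have "real j * real m + 1 < real Q" using hsr by simp
      then have "(real j * real m - real Q) * X \<le> 0"
        by (intro mult_nonpos_nonneg X0) simp
      also have "0 \<le> real j * u m + g" using nn g by simp
      finally show ?thesis .
    qed
  qed
  have mpos: "real m > 0" using m by simp
  have lt: "u m < real m * X" using contra mpos unfolding X_def Q_def
    by (simp add: field_simps)
  define d where "d = real m * X - u m"
  have d: "d > 0" using lt d_def by simp
  obtain j :: nat where j: "(real Q * X + g) / d < real j" using reals_Archimedean2 by blast
  have j1: "j \<ge> 1"
  proof (rule ccontr)
    assume "\<not> j \<ge> 1" then have "j = 0" by simp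
    with j have "(real Q * X + g) / d < 0" by simp
    moreover have "(real Q * X + g) / d \<ge> 0" using d X0 g by simp
    ultimately show False by simp
  qed
  have "real Q * X + g < real j * d" using j d by (simp add: field_simps)
  moreover have "(real j * real m - real Q) * X \<le> real j * u m + g" by (rule key[OF j1])
  ultimately show False unfolding d_def by (simp add: algebra_simps)
qed




lemma card_S:
  assumes ik: "i + k \<le> m"
  shows "card {xs. length xs = m \<and> set xs \<subseteq> {..<q} \<and> (\<forall>j<k. xs ! (i + j) = (0::nat))} \<le> q ^ (m - k)"
    (is "card ?S \<le> _")
proof -
  let ?f = "\<lambda>xs. take i xs @ drop (i + k) xs"
  have dec: "xs = take i xs @ replicate k 0 @ drop (i + k) xs" if "xs \<in> ?S" for xs
  proof -
    have "take k (drop i xs) = replicate k 0"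
      using that ik by (intro nth_equalityI) auto
    then show ?thesis
      by (metis append_take_drop_id drop_drop add.commute)
  qed
  have "inj_on ?f ?S"
  proof (rule inj_onI)
    fix x y assume x: "x \<in> ?S" and y: "y \<in> ?S" and e: "?f x = ?f y"
    have lx: "length (take i x) = i" and ly: "length (take i y) = i" using x y ik by auto
    have "take i x = take i y" using e lx ly by (metis append_eq_append_conv)
    moreover have "drop (i + k) x = drop (i + k) y" using e lx ly by (metis append_eq_append_conv)
    ultimately show "x = y" using dec[OF x] dec[OF y] by metis
  qed
  moreover have "?f ` ?S \<subseteq> {xs. set xs \<subseteq> {..<q} \<and> length xs = m - k}"
    using ik by (fastforce dest: in_set_takeD in_set_dropD)
  ultimately have "card ?S \<le> card {xs. set xs \<subseteq> {..<q} \<and> length xs = m - k}"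
    by (intro card_inj_on_le) (auto intro: finite_lists_length_eq)
  then show ?thesis by (simp add: card_lists_length_eq)
qed

lemma a_lower:
  assumes k: "k \<ge> 1" and q: "q \<ge> 1"
  shows "real (a_RLL q m k) \<ge> real q ^ m - real m * real q ^ m / real q ^ k"
proof -
  define B where "B = {xs. length xs = m \<and> set xs \<subseteq> {..<q} \<and> has_zero_run k xs}"
  define S where "S i = {xs. length xs = m \<and> set xs \<subseteq> {..<q} \<and> (\<forall>j<k. xs ! (i + j) = (0::nat))}" for i
  have all: "{xs. set xs \<subseteq> {..<q} \<and> length xs = m} = GG q m k \<union> B"
    by (auto simp: GG_def B_def is_RLL_iff)
  have finB: "finite B"
    by (rule finite_subset[OF _ finite_lists_length_eq[of "{..<q}" m]]) (auto simp: B_def)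
  have "card (GG q m k \<union> B) = card (GG q m k) + card B"
    by (rule card_Un_disjoint[OF finite_GG finB]) (auto simp: GG_def B_def is_RLL_iff)
  moreover have c: "card {xs. set xs \<subseteq> {..<q} \<and> length xs = m} = q ^ m"
    by (simp add: card_lists_length_eq)
  ultimately have eq: "q ^ m = a_RLL q m k + card B"
    using all by (simp add: a_GG)
  have cardB: "real (card B) \<le> real m * real q ^ m / real q ^ k"
  proof (cases "k \<le> m")
    case False
    then have "B = {}" by (auto simp: B_def has_zero_run_def)
    then show ?thesis by simp
  next
    case True
    have "B \<subseteq> (\<Union>i\<in>{i. i + k \<le> m}. S i)"
      by (auto simp: B_def S_def has_zero_run_def)
    then have "card B \<le> card (\<Union>i\<in>{i. i + k \<le> m}. S i)"
      by (intro card_mono) (auto simp: S_def intro!: finite_subset[OF _ finite_lists_length_eq[of "{..<q}" m]])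
    also have "\<dots> \<le> (\<Sum>i\<in>{i. i + k \<le> m}. card (S i))"
      by (rule card_UN_le) (rule finite_subset[of _ "{..m}"], auto)
    also have "\<dots> \<le> (\<Sum>i\<in>{i. i + k \<le> m}. q ^ (m - k))"
      by (intro sum_mono) (unfold S_def, rule card_S, auto)
    also have "\<dots> = card {i. i + k \<le> m} * q ^ (m - k)" by simp
    also have "\<dots> \<le> m * q ^ (m - k)"
    proof -
      have "{i. i + k \<le> m} \<subseteq> {..<m}" using k by auto
      then have "card {i. i + k \<le> m} \<le> m" using card_mono[of "{..<m}"] by fastforce
      then show ?thesis by simp
    qed
    finally have "real (card B) \<le> real m * real q ^ (m - k)"
      by (metis of_nat_le_iff of_nat_mult of_nat_power)
    also have "real q ^ (m - k) = real q ^ m / real q ^ k"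
      using True q by (simp add: power_diff)
    finally show ?thesis by simp
  qed
  have "real q ^ m = real (a_RLL q m k) + real (card B)"
    using eq by (metis of_nat_add of_nat_power)
  with cardB show ?thesis by linarith
qed




lemma E_bounds:
  assumes q: "q \<ge> 2" and k: "k \<ge> 1"
  shows "log 2 (real q) - 4 / real q ^ k \<le> E_RLL k q \<and> E_RLL k q \<le> log 2 (real q)"
proof -
  define u where "u m = log 2 (real (a_RLL q m k))" for m
  define g where "g = log 2 (real (q - 1))"
  have a1: "real (a_RLL q m k) \<ge> 1" for m using a_ge1[OF q k] by simp
  have apos: "real (a_RLL q m k) > 0" for m using a1[of m] by simp
  have nn: "u m \<ge> 0" for m unfolding u_def using a1[of m] by simp
  have q1: "real (q - 1) \<ge> 1" using q by simp
  have g0: "g \<ge> 0" unfolding g_def using q1 by simp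
  have sub: "u (m + n) \<le> u m + u n" for m n
  proof -
    have "real (a_RLL q (m + n) k) \<le> real (a_RLL q m k) * real (a_RLL q n k)"
      using a_sub[of q m n k] by (metis of_nat_le_iff of_nat_mult)
    then have "log 2 (real (a_RLL q (m + n) k)) \<le> log 2 (real (a_RLL q m k) * real (a_RLL q n k))"
      using apos[of "m + n"] by (intro log_mono) auto
    also have "\<dots> = u m + u n" unfolding u_def using apos[of m] apos[of n] by (simp add: log_mult)
    finally show ?thesis unfolding u_def .
  qed
  have sup: "u m + u n + g \<le> u (m + n + 1)" for m n
  proof -
    have "real (q - 1) * real (a_RLL q m k) * real (a_RLL q n k) \<le> real (a_RLL q (m + n + 1) k)"
      using a_sup[of q m k n] by (metis of_nat_le_iff of_nat_mult)
    then have "log 2 (real (q - 1) * real (a_RLL q m k) * real (a_RLL q n k)) \<le> u (m + n + 1)"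
      unfolding u_def using q1 apos[of m] apos[of n] by (intro log_mono) auto
    moreover have "log 2 (real (q - 1) * real (a_RLL q m k) * real (a_RLL q n k)) = g + u m + u n"
      unfolding u_def g_def using q q1 apos[of m] apos[of n] by (simp add: log_mult)
    ultimately show ?thesis by simp
  qed
  define L where "L = (INF n\<in>{1::nat..}. u n / real n)"
  have bdd: "bdd_below ((\<lambda>n. u n / real n) ` {1..})"
    by (rule bdd_belowI[of _ 0]) (auto simp: nn)
  have EL: "E_RLL k q = L"
  proof -
    have "(\<lambda>n. u n / real n) \<longlonglongrightarrow> L" unfolding L_def by (rule fekete[OF sub nn])
    then have "lim (\<lambda>n. u n / real n) = L" by (rule limI)
    then show ?thesis unfolding E_RLL_def u_def .
  qed
  have upper: "L \<le> log 2 (real q)"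
  proof -
    have "L \<le> u 1 / real (1::nat)" unfolding L_def by (rule cINF_lower[OF bdd]) simp
    also have "\<dots> \<le> log 2 (real q)" unfolding u_def
      using a_le[of q 1 k] apos[of 1] by (simp add: log_mono)
    finally show ?thesis .
  qed
  define P where "P = q ^ k div 2"
  define X where "X = (u P + g) / real (P + 1)"
  have XL: "X \<le> L" unfolding L_def X_def
  proof (rule cINF_greatest)
    fix m :: nat assume "m \<in> {1..}"
    then have "m \<ge> 1" by simp
    then show "(u P + g) / real (P + 1) \<le> u m / real m" by (rule lower_abstract[OF sub sup nn g0])
  qed simp
  have qk: "real q ^ k \<ge> 2"
  proof -
    have "q ^ 1 \<le> q ^ k" using q k by (intro power_increasing) auto
    then have "2 \<le> q ^ k" using q by simp
    then have "real 2 \<le> real (q ^ k)" by (simp only: of_nat_le_iff)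
    then show ?thesis by simp
  qed
  have qkpos: "real q ^ k > 0" using qk q by simp
  have P2: "2 * real P \<le> real q ^ k"
  proof -
    have "2 * P \<le> q ^ k" unfolding P_def by simp
    then have "real (2 * P) \<le> real (q ^ k)" by (simp only: of_nat_le_iff)
    then show ?thesis by simp
  qed
  have P1: "real q ^ k \<le> 2 * real (P + 1)"
  proof -
    have "q ^ k \<le> 2 * (P + 1)" unfolding P_def by simp
    then have "real (q ^ k) \<le> real (2 * (P + 1))" by (simp only: of_nat_le_iff)
    then show ?thesis by simp
  qed
  have qP: "real q ^ P > 0" using q by simp
  have aP: "real (a_RLL q P k) \<ge> real q ^ P / 2"
  proof -
    have "real P * real q ^ P / real q ^ k \<le> real q ^ P / 2"
      using P2 qkpos qP by (simp add: field_simps)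
    then show ?thesis using a_lower[OF k, of q P] q by simp
  qed
  have uP: "u P \<ge> real P * log 2 (real q) - 1"
  proof -
    have "log 2 (real q ^ P / 2) \<le> u P" unfolding u_def
      using aP qP by (intro log_mono) auto
    moreover have "log 2 (real q ^ P / 2) = real P * log 2 (real q) - 1"
      using q qP by (simp add: log_divide log_nat_power)
    ultimately show ?thesis by simp
  qed
  have gq: "g \<ge> log 2 (real q) - 1"
  proof -
    have "log 2 (real q) \<le> log 2 (2 * real (q - 1))"
      using q by (intro log_mono) auto
    also have "\<dots> = log 2 2 + g" unfolding g_def using q1 by (intro log_mult_pos) auto
    also have "\<dots> = 1 + g" by simp
    finally show ?thesis by simp
  qed
  have "X \<ge> log 2 (real q) - 2 / real (P + 1)"
  proof -
    have "u P + g \<ge> real (P + 1) * log 2 (real q) - 2" using uP gq by (simp add: algebra_simps)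
    then have "(real (P + 1) * log 2 (real q) - 2) / real (P + 1) \<le> (u P + g) / real (P + 1)"
      by (intro divide_right_mono) auto
    moreover have "(real (P + 1) * log 2 (real q) - 2) / real (P + 1) = log 2 (real q) - 2 / real (P + 1)"
      by (simp add: field_simps)
    ultimately show ?thesis unfolding X_def by simp
  qed
  moreover have "2 / real (P + 1) \<le> 4 / real q ^ k"
    using P1 qkpos by (simp add: field_simps)
  ultimately show ?thesis using XL upper EL by linarith
qed




theorem lemma3:
  fixes q :: nat and z :: int
  assumes "q \<ge> 2"
  shows "\<exists>(N::nat) (C::real). C > 0 \<and>
    (\<forall>n::nat. n \<ge> N \<longrightarrow>
      (let k = nat (\<lceil>log (real q) (real n)\<rceil> + z) in
        log 2 (real q) - C / real n \<le> E_RLL k q \<and> E_RLL k q \<le> log 2 (real q)))"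
proof -
  define r where "r = real q"
  have r1: "r > 1" and r0: "r > 0" using assms unfolding r_def by auto
  define C where "C = 4 / r powr real_of_int z"
  define N where "N = nat \<lceil>r powr (1 - real_of_int z)\<rceil> + 1"
  have Cpos: "C > 0" unfolding C_def using r0 by simp
  show ?thesis
  proof (intro exI[of _ N] exI[of _ C] conjI Cpos allI impI)
    fix n :: nat assume nN: "N \<le> n"
    define c where "c = \<lceil>log r (real n)\<rceil> + z"
    define k where "k = nat c"
    have "real n \<ge> real N" using nN by simp
    moreover have "real N > r powr (1 - real_of_int z)"
      unfolding N_def by (simp add: of_nat_nat) linarith
    ultimately have nbig: "real n > r powr (1 - real_of_int z)" by simp
    have "r powr (1 - real_of_int z) > 0" using r0 by simp
    then have npos: "real n > 0" using nbig by linarith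
    have "1 - real_of_int z < log r (real n)"
      using less_log_iff[OF r1 npos] nbig by simp
    note lt = this
    have clog: "real_of_int c \<ge> log r (real n) + real_of_int z"
      unfolding c_def using le_of_int_ceiling[of "log r (real n)"] by simp
    have "real_of_int c > 1" using clog lt by linarith
    then have c1: "c \<ge> 1" by simp
    have k1: "k \<ge> 1" unfolding k_def using c1 by simp
    have rk: "real k = real_of_int c" unfolding k_def using c1 by simp
    have "r powr (log r (real n) + real_of_int z) \<le> r powr real k"
      using clog rk r1 by (intro powr_mono) auto
    moreover have "r powr (log r (real n) + real_of_int z) = real n * r powr real_of_int z"
      using r1 npos by (simp add: powr_add)
    moreover have "r powr real k = r ^ k" using r0 by (simp add: powr_realpow)
    ultimately have qk: "real n * r powr real_of_int z \<le> r ^ k" by simp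
    have "4 / r ^ k \<le> 4 / (real n * r powr real_of_int z)"
      using qk npos r0 by (intro divide_left_mono mult_pos_pos) auto
    also have "\<dots> = C / real n" unfolding C_def by (simp add: field_simps)
    finally have bound: "4 / r ^ k \<le> C / real n" .
    have E: "log 2 r - 4 / r ^ k \<le> E_RLL k q \<and> E_RLL k q \<le> log 2 r"
      using E_bounds[OF assms k1] unfolding r_def .
    have kk: "nat (\<lceil>log (real q) (real n)\<rceil> + z) = k" unfolding k_def c_def r_def ..
    show "let k = nat (\<lceil>log (real q) (real n)\<rceil> + z) in
        log 2 (real q) - C / real n \<le> E_RLL k q \<and> E_RLL k q \<le> log 2 (real q)"
      unfolding kk Let_def using E bound unfolding r_def by linarith
  qed
qed


end
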